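(* Let $\mathbb{X}$ be a finite-dimensional real Euclidean space and let $\boldsymbol{M}_1,\boldsymbol{M}_2:\mathbb{X}\rightrightarrows\mathbb{X}$ be such that $\boldsymbol{M}_1$, $\boldsymbol{M}_2$ and $\boldsymbol{M}_1+\boldsymbol{M}_2$ are maximal monotone and $\operatorname{Zer}(\boldsymbol{M}_1+\boldsymbol{M}_2)\neq\emptyset$. Let $\sigma>0$, $\eta^0\in\mathbb{X}$, and let $\{w^k,x^k,v^k,\eta^k\}_{k\ge1}$ be generated by the HPR iteration: for $k\ge0$, $w^{k+1}=\boldsymbol{J}_{\sigma\boldsymbol{M}_2}(\eta^k)$, $x^{k+1}=\boldsymbol{J}_{\sigma\boldsymbol{M}_1}(2w^{k+1}-\eta^k)$, $v^{k+1}=2x^{k+1}-(2w^{k+1}-\eta^k)$, $\eta^{k+1}=\frac{1}{k+2}\eta^0+\frac{k+1}{k+2}v^{k+1}$. Let $\eta^*:=\Pi_{\operatorname{Fix}(\mathbf{T}^{\rm PR}_\sigma)}(\eta^0)$ and $w^*:=\boldsymbol{J}_{\sigma\boldsymbol{M}_2}(\eta^* )$. Then $\eta^k\to\eta^*$, $v^k\to\eta^*$, $x^k\to w^*$, $w^k\to w^*$, and $w^*\in\operatorname{Zer}(\boldsymbol{M}_1+\boldsymbol{M}_2)$, i.e. $0\in\boldsymbol{M}_1w^*+\boldsymbol{M}_2w^*$.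
   Context: For a maximal monotone $\boldsymbol{M}$, $\boldsymbol{J}_{\boldsymbol{M}}:=(\boldsymbol{I}+\boldsymbol{M})^{-1}$ is its resolvent and $\boldsymbol{R}_{\boldsymbol{M}}:=2\boldsymbol{J}_{\boldsymbol{M}}-\boldsymbol{I}$ its reflected resolvent. The Peaceman–Rachford operator is $\mathbf{T}^{\rm PR}_\sigma:=\boldsymbol{R}_{\sigma\boldsymbol{M}_1}\circ\boldsymbol{R}_{\sigma\boldsymbol{M}_2}$, $\operatorname{Fix}(\cdot)$ is the set of fixed points, and $\Pi_C$ is the Euclidean projection onto a closed convex set $C$. *)

theory Defs
  imports "HOL-Analysis.Analysis"
begin

definition monotone_op :: "('a::real_inner \<Rightarrow> 'a set) \<Rightarrow> bool" where
  "monotone_op M \<longleftrightarrow> (\<forall>x y u v. u \<in> M x \<longrightarrow> v \<in> M y \<longrightarrow> inner (x - y) (u - v) \<ge> 0)"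

definition maximal_monotone :: "('a::real_inner \<Rightarrow> 'a set) \<Rightarrow> bool" where
  "maximal_monotone M \<longleftrightarrow> monotone_op M \<and>
     (\<forall>x u. (\<forall>y v. v \<in> M y \<longrightarrow> inner (x - y) (u - v) \<ge> 0) \<longrightarrow> u \<in> M x)"

definition op_sum :: "('a::real_vector \<Rightarrow> 'a set) \<Rightarrow> ('a \<Rightarrow> 'a set) \<Rightarrow> ('a \<Rightarrow> 'a set)" where
  "op_sum M1 M2 = (\<lambda>x. {u + v | u v. u \<in> M1 x \<and> v \<in> M2 x})"

definition op_scale :: "real \<Rightarrow> ('a::real_vector \<Rightarrow> 'a set) \<Rightarrow> ('a \<Rightarrow> 'a set)" where
  "op_scale c M = (\<lambda>x. (\<lambda>u. c *\<^sub>R u) ` M x)"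

definition zer :: "('a::real_vector \<Rightarrow> 'a set) \<Rightarrow> 'a set" where
  "zer M = {x. 0 \<in> M x}"

text \<open>Resolvent J_M = (I + M)^{-1}: J_M z is the point x with z \<in> x + M x
  (single-valued and total for maximal monotone M, by Minty's theorem).\<close>
definition resolvent :: "('a::real_vector \<Rightarrow> 'a set) \<Rightarrow> 'a \<Rightarrow> 'a" where
  "resolvent M z = (THE x. z - x \<in> M x)"

definition refl_resolvent :: "('a::real_vector \<Rightarrow> 'a set) \<Rightarrow> 'a \<Rightarrow> 'a" where
  "refl_resolvent M z = 2 *\<^sub>R resolvent M z - z"

definition PR_op :: "real \<Rightarrow> ('a::real_vector \<Rightarrow> 'a set) \<Rightarrow> ('a \<Rightarrow> 'a set) \<Rightarrow> 'a \<Rightarrow> 'a" where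
  "PR_op \<sigma> M1 M2 = refl_resolvent (op_scale \<sigma> M1) \<circ> refl_resolvent (op_scale \<sigma> M2)"

definition fixpoints :: "('a \<Rightarrow> 'a) \<Rightarrow> 'a set" where
  "fixpoints T = {z. T z = z}"

end

theory Submission
  imports Defs
begin

lemma mean_ineq:
  fixes a c :: "nat \<Rightarrow> 'a::real_inner"
  assumes fin: "finite I" and u0: "\<forall>i\<in>I. u i \<ge> 0" and u1: "sum u I = 1"
    and mono: "\<forall>i\<in>I. \<forall>j\<in>I. inner (a i - a j) (c i - c j) \<ge> 0"
    and x: "2 *\<^sub>R x = (\<Sum>i\<in>I. u i *\<^sub>R a i) - (\<Sum>i\<in>I. u i *\<^sub>R c i)"
  shows "(\<Sum>i\<in>I. u i * inner (x - a i) (x + c i)) \<le> 0"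
proof -
  define A where "A = (\<Sum>i\<in>I. u i *\<^sub>R a i)"
  define C where "C = (\<Sum>i\<in>I. u i *\<^sub>R c i)"
  define S where "S = (\<Sum>i\<in>I. u i * inner (a i) (c i))"
  have AC: "(\<Sum>i\<in>I. \<Sum>j\<in>I. u i * u j * inner (a j) (c i)) = inner A C"
    by (simp add: A_def C_def inner_sum_left inner_sum_right sum_distrib_left mult.assoc)
  have AC2: "(\<Sum>i\<in>I. \<Sum>j\<in>I. u i * u j * inner (a i) (c j)) = inner A C"
  proof -
    have "(\<Sum>i\<in>I. \<Sum>j\<in>I. u i * u j * inner (a i) (c j)) = (\<Sum>j\<in>I. \<Sum>i\<in>I. u i * u j * inner (a i) (c j))"
      by (rule sum.swap)
    also have "\<dots> = (\<Sum>j\<in>I. \<Sum>i\<in>I. u j * u i * inner (a i) (c j))" by (simp add: mult.commute)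
    also have "\<dots> = inner A C" by (rule AC)
    finally show ?thesis .
  qed
  have S1: "(\<Sum>i\<in>I. \<Sum>j\<in>I. u i * u j * inner (a i) (c i)) = S"
  proof -
    have e: "(\<Sum>j\<in>I. u i * u j) = u i" for i by (simp add: sum_distrib_left[symmetric] u1)
    show ?thesis by (simp add: S_def sum_distrib_right[symmetric] e mult.commute mult.left_commute)
  qed
  have S2: "(\<Sum>i\<in>I. \<Sum>j\<in>I. u i * u j * inner (a j) (c j)) = S"
  proof -
    have "(\<Sum>i\<in>I. \<Sum>j\<in>I. u i * u j * inner (a j) (c j)) = (\<Sum>i\<in>I. u i * (\<Sum>j\<in>I. u j * inner (a j) (c j)))"
      by (simp add: sum_distrib_left mult.assoc)
    also have "\<dots> = (\<Sum>i\<in>I. u i) * S" by (simp add: sum_distrib_right S_def)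
    finally show ?thesis by (simp add: u1)
  qed
  have "0 \<le> (\<Sum>i\<in>I. \<Sum>j\<in>I. u i * u j * inner (a i - a j) (c i - c j))"
    using u0 mono by (intro sum_nonneg) auto
  also have "\<dots> = (\<Sum>i\<in>I. \<Sum>j\<in>I. u i * u j * inner (a i) (c i) - u i * u j * inner (a i) (c j)
      - u i * u j * inner (a j) (c i) + u i * u j * inner (a j) (c j))"
    by (simp add: inner_diff_left inner_diff_right algebra_simps)
  also have "\<dots> = 2 * S - 2 * inner A C"
    by (simp add: sum.distrib sum_subtractf AC AC2 S1 S2)
  finally have SAC: "inner A C \<le> S" by simp
  have "(\<Sum>i\<in>I. u i * inner (x - a i) (x + c i))
      = (\<Sum>i\<in>I. u i * inner x x + inner x (u i *\<^sub>R c i) - inner (u i *\<^sub>R a i) x - u i * inner (a i) (c i))"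
    by (simp add: inner_diff_left inner_add_right algebra_simps)
  also have "\<dots> = inner x x + inner x C - inner A x - S"
    by (simp add: sum.distrib sum_subtractf sum_distrib_right[symmetric] u1 inner_sum_left inner_sum_right A_def C_def S_def)
  also have "\<dots> = inner x x - inner x (A - C) - S"
    by (simp add: inner_diff_right inner_commute)
  also have "A - C = 2 *\<^sub>R x" using x by (simp add: A_def C_def)
  also have "inner x x - inner x (2 *\<^sub>R x) - S = - inner x x - S" by simp
  also have "\<dots> \<le> - inner x x - inner A C" using SAC by simp
  also have "\<dots> = - inner (A + C) (A + C) / 4"
  proof -
    have "A = 2 *\<^sub>R x + C" using x by (simp add: A_def C_def)
    then show ?thesis by (simp add: inner_add_left inner_add_right inner_commute algebra_simps)
  qed
  also have "\<dots> \<le> 0" by simp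
  finally show ?thesis .
qed

lemma cont_Max:
  fixes f :: "'p \<Rightarrow> 'a::topological_space \<Rightarrow> real"
  assumes "finite P" "P \<noteq> {}" "\<And>p. p \<in> P \<Longrightarrow> continuous_on S (f p)"
  shows "continuous_on S (\<lambda>x. Max ((\<lambda>p. f p x) ` P))"
  using assms
proof (induction P rule: finite_ne_induct)
  case (singleton p) then show ?case by simp
next
  case (insert p F)
  have "continuous_on S (\<lambda>x. max (f p x) (Max ((\<lambda>p. f p x) ` F)))"
    using insert by (intro continuous_on_max) auto
  moreover have "Max ((\<lambda>q. f q x) ` insert p F) = max (f p x) (Max ((\<lambda>p. f p x) ` F))" for x
    using insert by (simp add: Max_insert)
  ultimately show ?case by simp
qed

lemma g_ball: "4 * inner (x - a) (x + c) = (norm (2 *\<^sub>R x - (a - c)))^2 - (norm (a + c))^2"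
  for x a c :: "'a::real_inner"
  by (simp add: power2_norm_eq_inner inner_diff_left inner_diff_right inner_add_left inner_add_right
      algebra_simps inner_commute)

lemma sq_bound: "(norm (y::'a::real_normed_vector))^2 \<le> K \<Longrightarrow> norm y \<le> max 1 K"
  by (smt (verit, ccfv_SIG) one_le_power power2_eq_square mult_le_cancel_left1 norm_ge_zero)

lemma finite_minty:
  fixes P :: "('a::euclidean_space \<times> 'a) set"
  assumes fin: "finite P"
    and mono: "\<And>a c a' c'. (a,c)\<in>P \<Longrightarrow> (a',c')\<in>P \<Longrightarrow> inner (a - a') (c - c') \<ge> 0"
  shows "\<exists>x. \<forall>(a,c)\<in>P. inner (x - a) (x + c) \<le> 0"
proof (cases "P = {}")
  case True then show ?thesis by auto
next
  case ne: False
  define g where "g p x = inner (x - fst p) (x + snd p)" for p and x :: 'a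
  define h where "h x = Max ((\<lambda>p. g p x) ` P)" for x
  define v where "v x p = 2 *\<^sub>R x - fst p + snd p" for x :: 'a and p :: "'a \<times> 'a"
  have gcont: "continuous_on UNIV (g p)" for p unfolding g_def by (intro continuous_intros)
  have hcont: "continuous_on UNIV h" unfolding h_def by (rule cont_Max[OF fin ne gcont])
  have gle: "p \<in> P \<Longrightarrow> g p x \<le> h x" for p x unfolding h_def using fin by (intro Max_ge) auto
  have hlt: "h y < t \<longleftrightarrow> (\<forall>p\<in>P. g p y < t)" for y t unfolding h_def using fin ne by simp
  obtain p0 where p0: "p0 \<in> P" using ne by auto
  define S where "S = {x. h x \<le> h 0}"
  have "closed S" unfolding S_def by (rule closed_Collect_le[OF hcont]) simp
  moreover have "bounded S"
  proof -
    let ?d = "fst p0 - snd p0"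
    let ?K = "4 * h 0 + (norm (fst p0 + snd p0))^2"
    have "norm x \<le> (norm ?d + max 1 ?K) / 2" if "x \<in> S" for x
    proof -
      have "g p0 x \<le> h 0" using that gle[OF p0, of x] by (simp add: S_def)
      then have "(norm (2 *\<^sub>R x - ?d))^2 \<le> ?K"
        using g_ball[of x "fst p0" "snd p0"] by (simp add: g_def)
      then have "norm (2 *\<^sub>R x - ?d) \<le> max 1 ?K" by (rule sq_bound)
      moreover have "norm (2 *\<^sub>R x) \<le> norm (2 *\<^sub>R x - ?d) + norm ?d" by (metis norm_triangle_ineq4 diff_add_cancel norm_triangle_ineq)
      ultimately show ?thesis by simp
    qed
    then show ?thesis unfolding bounded_iff by blast
  qed
  ultimately have "compact S" by (simp add: compact_eq_bounded_closed)
  moreover have "0 \<in> S" by (simp add: S_def)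
  ultimately obtain x0 where "x0 \<in> S" and x0S: "\<forall>y\<in>S. h x0 \<le> h y"
    using continuous_attains_inf[of S h] continuous_on_subset[OF hcont] by blast
  have x0min: "h x0 \<le> h y" for y
  proof (cases "y \<in> S")
    case True then show ?thesis using x0S by blast
  next
    case False then show ?thesis using x0S \<open>0 \<in> S\<close> by (force simp: S_def)
  qed
  define m where "m = h x0"
  define A where "A = {p\<in>P. g p x0 = m}"
  have "finite A" using fin by (simp add: A_def)
  have ident: "g p (x0 + t *\<^sub>R d) = g p x0 + t * (inner d (v x0 p) + t * inner d d)" for p t d
    unfolding g_def v_def
    by (simp add: inner_add_left inner_add_right inner_diff_left inner_diff_right algebra_simps inner_commute)
  have zero_in: "0 \<in> convex hull (v x0 ` A)"
  proof (rule ccontr)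
    assume nz: "0 \<notin> convex hull (v x0 ` A)"
    have "closed (convex hull (v x0 ` A))"
      using \<open>finite A\<close> by (intro compact_imp_closed compact_convex_hull finite_imp_compact) simp
    then obtain a b where "a \<noteq> 0" "0 < b" and ab: "\<forall>y\<in>convex hull (v x0 ` A). inner a y > b"
      using separating_hyperplane_closed_0[OF convex_convex_hull _ nz] by blast
    have av: "inner a (v x0 p) > b" if "p \<in> A" for p
      using ab that by (simp add: hull_inc)
    define d where "d = - a"
    have ev: "eventually (\<lambda>t. g p (x0 + t *\<^sub>R d) < m) (at_right (0::real))" if "p \<in> P" for p
    proof (cases "p \<in> A")
      case True
      have lim: "((\<lambda>t. inner d (v x0 p) + t * inner d d) \<longlongrightarrow> inner d (v x0 p) + 0 * inner d d) (at_right (0::real))"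
        by (intro tendsto_intros)
      have "inner d (v x0 p) < 0" using av[OF True] \<open>0 < b\<close> by (simp add: d_def)
      then have "eventually (\<lambda>t. inner d (v x0 p) + t * inner d d < 0) (at_right (0::real))"
        using order_tendstoD(2)[OF lim] by simp
      moreover have "eventually (\<lambda>t. t > 0) (at_right (0::real))" by (simp add: eventually_at_right_less)
      ultimately show ?thesis
      proof eventually_elim
        case (elim t)
        then have "t * (inner d (v x0 p) + t * inner d d) < 0" by (simp add: mult_pos_neg)
        then show ?case using True by (simp add: ident A_def)
      qed
    next
      case False
      then have lt: "g p x0 < m" using gle[OF that, of x0] that by (auto simp: A_def m_def)
      have lim: "((\<lambda>t. g p x0 + t * (inner d (v x0 p) + t * inner d d)) \<longlongrightarrow> g p x0 + 0 * (inner d (v x0 p) + 0 * inner d d)) (at_right (0::real))"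
        by (intro tendsto_intros)
      then have "eventually (\<lambda>t. g p x0 + t * (inner d (v x0 p) + t * inner d d) < m) (at_right (0::real))"
        using order_tendstoD(2)[OF lim] lt by simp
      then show ?thesis by (simp add: ident)
    qed
    have "eventually (\<lambda>t. \<forall>p\<in>P. g p (x0 + t *\<^sub>R d) < m) (at_right (0::real))"
      using fin ev by (simp add: eventually_ball_finite)
    then obtain t :: real where "\<forall>p\<in>P. g p (x0 + t *\<^sub>R d) < m"
      using eventually_happens trivial_limit_at_right_real by blast
    then have "h (x0 + t *\<^sub>R d) < h x0" using hlt by (simp add: m_def)
    then show False using x0min[of "x0 + t *\<^sub>R d"] by simp
  qed
  then obtain k u xs where u0: "\<forall>i\<in>{1::nat..k}. 0 \<le> u i \<and> xs i \<in> v x0 ` A"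
    and u1: "sum u {1..k} = 1" and usum: "(\<Sum>i = 1..k. u i *\<^sub>R xs i) = 0"
    unfolding convex_hull_indexed by blast
  have "\<forall>i\<in>{1..k}. \<exists>p. p \<in> A \<and> xs i = v x0 p" using u0 by blast
  then obtain q where q: "\<And>i. i \<in> {1..k} \<Longrightarrow> q i \<in> A \<and> xs i = v x0 (q i)" by metis
  have qP: "i \<in> {1..k} \<Longrightarrow> q i \<in> P" for i using q by (auto simp: A_def)
  have "(\<Sum>i\<in>{1..k}. u i * inner (x0 - fst (q i)) (x0 + snd (q i))) \<le> 0"
  proof (rule mean_ineq)
    show "\<forall>i\<in>{1..k}. \<forall>j\<in>{1..k}. 0 \<le> inner (fst (q i) - fst (q j)) (snd (q i) - snd (q j))"
      using qP mono by (metis prod.collapse)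
    have "0 = (\<Sum>i = 1..k. u i *\<^sub>R (2 *\<^sub>R x0 - fst (q i) + snd (q i)))"
      using usum q by (simp add: v_def)
    also have "\<dots> = (\<Sum>i = 1..k. u i) *\<^sub>R (2 *\<^sub>R x0) - (\<Sum>i = 1..k. u i *\<^sub>R fst (q i)) + (\<Sum>i = 1..k. u i *\<^sub>R snd (q i))"
      by (simp only: scaleR_diff_right scaleR_add_right sum.distrib sum_subtractf scaleR_sum_left)
    finally show "2 *\<^sub>R x0 = (\<Sum>i = 1..k. u i *\<^sub>R fst (q i)) - (\<Sum>i = 1..k. u i *\<^sub>R snd (q i))"
      using u1 by (simp add: algebra_simps)
  qed (use u0 u1 in auto)
  moreover have "(\<Sum>i\<in>{1..k}. u i * inner (x0 - fst (q i)) (x0 + snd (q i))) = (\<Sum>i\<in>{1..k}. u i * m)"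
    using q by (intro sum.cong) (auto simp: A_def g_def)
  ultimately have "m \<le> 0" using u1 by (simp add: sum_distrib_right[symmetric])
  then have "\<forall>p\<in>P. g p x0 \<le> 0" using gle[of _ x0] unfolding m_def by (meson order_trans)
  then show ?thesis unfolding g_def by (intro exI[of _ x0]) auto
qed

lemma mm_mono:
  assumes "maximal_monotone M" "u \<in> M x" "v \<in> M y"
  shows "inner (x - y) (u - v) \<ge> 0"
  using assms unfolding maximal_monotone_def monotone_op_def by blast

lemma K_cball:
  fixes a c :: "'a::real_inner"
  shows "{x. inner (x - a) (x + c) \<le> 0} = cball ((1/2) *\<^sub>R (a - c)) (norm (a + c) / 2)"
proof (rule set_eqI)
  fix x :: 'a
  have "inner (x - a) (x + c) \<le> 0 \<longleftrightarrow> (norm (2 *\<^sub>R x - (a - c)))^2 \<le> (norm (a + c))^2"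
    using g_ball[of x a c] by linarith
  also have "\<dots> \<longleftrightarrow> norm (2 *\<^sub>R x - (a - c)) \<le> norm (a + c)"
    by (simp add: power2_le_iff_abs_le)
  also have "norm (2 *\<^sub>R x - (a - c)) = 2 * dist ((1/2) *\<^sub>R (a - c)) x"
  proof -
    have "2 *\<^sub>R x - (a - c) = 2 *\<^sub>R (x - (1/2) *\<^sub>R (a - c))" by (simp add: algebra_simps)
    then show ?thesis by (simp add: dist_norm norm_minus_commute)
  qed
  finally have *: "inner (x - a) (x + c) \<le> 0 \<longleftrightarrow> 2 * dist ((1/2) *\<^sub>R (a - c)) x \<le> norm (a + c)" .
  show "x \<in> {x. inner (x - a) (x + c) \<le> 0} \<longleftrightarrow> x \<in> cball ((1/2) *\<^sub>R (a - c)) (norm (a + c) / 2)"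
    unfolding mem_Collect_eq mem_cball * by linarith
qed

lemma minty:
  fixes M :: "'a::euclidean_space \<Rightarrow> 'a set"
  assumes mm: "maximal_monotone M"
  shows "\<exists>x. z - x \<in> M x"
proof -
  have mono: "\<And>x y u v. u \<in> M x \<Longrightarrow> v \<in> M y \<Longrightarrow> inner (x - y) (u - v) \<ge> 0"
    using mm_mono[OF mm] by blast
  have maxi: "\<And>x u. (\<forall>y v. v \<in> M y \<longrightarrow> inner (x - y) (u - v) \<ge> 0) \<Longrightarrow> u \<in> M x"
    using mm unfolding maximal_monotone_def by blast
  define G where "G = {(a, b - z) | a b. b \<in> M a}"
  define K where "K p = {x. inner (x - fst p) (x + snd p) \<le> 0}" for p :: "'a \<times> 'a"
  have Gmono: "inner (a - a') (c - c') \<ge> 0" if h1: "(a,c) \<in> G" and h2: "(a',c') \<in> G" for a c a' c'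
  proof -
    obtain b where "c = b - z" "b \<in> M a" using h1 unfolding G_def by blast
    moreover obtain b' where "c' = b' - z" "b' \<in> M a'" using h2 unfolding G_def by blast
    ultimately show ?thesis using mono by simp
  qed
  have cK: "compact (K p)" for p unfolding K_def K_cball by simp
  show ?thesis
  proof (cases "G = {}")
    case True
    then have "\<forall>y v. v \<in> M y \<longrightarrow> inner (0 - y) ((z - 0) - v) \<ge> 0" by (auto simp: G_def)
    then show ?thesis using maxi by blast
  next
    case False
    then obtain p0 where p0: "p0 \<in> G" by auto
    have "K p0 \<inter> \<Inter>(K ` G) \<noteq> {}"
    proof (rule compact_imp_fip[OF cK])
      show "closed T" if "T \<in> K ` G" for T using that cK compact_imp_closed by blast
      fix F' assume "finite F'" "F' \<subseteq> K ` G"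
      then obtain P' where P': "P' \<subseteq> G" "finite P'" "F' = K ` P'"
        by (meson finite_subset_image)
      have fin': "finite (insert p0 P')" using P' by simp
      have mono': "\<And>a c a' c'. (a,c)\<in>insert p0 P' \<Longrightarrow> (a',c')\<in>insert p0 P' \<Longrightarrow> inner (a - a') (c - c') \<ge> 0"
      proof -
        fix a c a' c' assume "(a,c)\<in>insert p0 P'" "(a',c')\<in>insert p0 P'"
        then have "(a,c) \<in> G" "(a',c') \<in> G" using P' p0 by auto
        then show "inner (a - a') (c - c') \<ge> 0" by (rule Gmono)
      qed
      have "\<exists>x. \<forall>(a,c)\<in>insert p0 P'. inner (x - a) (x + c) \<le> 0"
        by (rule finite_minty[OF fin'], erule (1) mono')
      then obtain x where x: "\<forall>(a,c)\<in>insert p0 P'. inner (x - a) (x + c) \<le> 0"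
        by (elim exE)
      have xK: "x \<in> K p" if "p \<in> insert p0 P'" for p
      proof -
        obtain a c where "p = (a,c)" by (cases p)
        then show ?thesis using x that by (auto simp: K_def)
      qed
      have "x \<in> K p0 \<inter> \<Inter>F'" using xK unfolding P'(3) by blast
      then show "K p0 \<inter> \<Inter>F' \<noteq> {}" by blast
    qed
    then obtain x0 where "x0 \<in> K p0 \<inter> \<Inter>(K ` G)" by blast
    then have x: "\<forall>p\<in>G. x0 \<in> K p" by blast
    define x where "x = x0"
    have "\<forall>y v. v \<in> M y \<longrightarrow> inner (x - y) ((z - x) - v) \<ge> 0"
    proof (intro allI impI)
      fix y v assume "v \<in> M y"
      then have "(y, v - z) \<in> G" by (auto simp: G_def)
      then have "x \<in> K (y, v - z)" using x by (simp add: x_def)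
      then have "inner (x - y) (x + (v - z)) \<le> 0" by (simp add: K_def)
      moreover have "inner (x - y) ((z - x) - v) = - inner (x - y) (x + (v - z))"
        by (simp add: inner_diff_right inner_add_right)
      ultimately show "inner (x - y) ((z - x) - v) \<ge> 0" by simp
    qed
    then show ?thesis using maxi by blast
  qed
qed

lemma scale_maxmono:
  assumes mm: "maximal_monotone M" and s: "\<sigma> > 0"
  shows "maximal_monotone (op_scale \<sigma> M)"
proof -
  have mono: "\<And>x y u v. u \<in> M x \<Longrightarrow> v \<in> M y \<Longrightarrow> inner (x - y) (u - v) \<ge> 0"
    using mm_mono[OF mm] by blast
  have maxi: "\<And>x u. (\<forall>y v. v \<in> M y \<longrightarrow> inner (x - y) (u - v) \<ge> 0) \<Longrightarrow> u \<in> M x"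
    using mm unfolding maximal_monotone_def by blast
  have "monotone_op (op_scale \<sigma> M)"
    unfolding monotone_op_def op_scale_def
  proof (clarsimp)
    fix x y u v assume "u \<in> M x" "v \<in> M y"
    then have "0 \<le> \<sigma> * inner (x - y) (u - v)" using mono s by simp
    then show "0 \<le> inner (x - y) (\<sigma> *\<^sub>R u - \<sigma> *\<^sub>R v)"
      by (simp add: scaleR_diff_right[symmetric])
  qed
  moreover have "u \<in> op_scale \<sigma> M x"
    if h: "\<forall>y v. v \<in> op_scale \<sigma> M y \<longrightarrow> inner (x - y) (u - v) \<ge> 0" for x u
  proof -
    have "\<forall>y v. v \<in> M y \<longrightarrow> inner (x - y) ((1/\<sigma>) *\<^sub>R u - v) \<ge> 0"
    proof (intro allI impI)
      fix y v assume "v \<in> M y"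
      then have "inner (x - y) (u - \<sigma> *\<^sub>R v) \<ge> 0" using h by (auto simp: op_scale_def)
      moreover have "u - \<sigma> *\<^sub>R v = \<sigma> *\<^sub>R ((1/\<sigma>) *\<^sub>R u - v)" using s by (simp add: algebra_simps)
      ultimately have "0 \<le> \<sigma> * inner (x - y) ((1/\<sigma>) *\<^sub>R u - v)" by simp
      then show "inner (x - y) ((1/\<sigma>) *\<^sub>R u - v) \<ge> 0" using s by (simp add: zero_le_mult_iff)
    qed
    then have "(1/\<sigma>) *\<^sub>R u \<in> M x" by (rule maxi)
    moreover have "u = \<sigma> *\<^sub>R ((1/\<sigma>) *\<^sub>R u)" using s by simp
    ultimately show ?thesis unfolding op_scale_def by blast
  qed
  ultimately show ?thesis unfolding maximal_monotone_def by blast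
qed

lemma resolvent_eq:
  assumes mm: "maximal_monotone M" and "z - x \<in> M x"
  shows "resolvent M z = x"
proof -
  have mono: "\<And>x y u v. u \<in> M x \<Longrightarrow> v \<in> M y \<Longrightarrow> inner (x - y) (u - v) \<ge> 0"
    using mm_mono[OF mm] by blast
  have "y = x" if "z - y \<in> M y" for y
  proof -
    have "0 \<le> inner (y - x) ((z - y) - (z - x))" by (rule mono[OF that assms(2)])
    moreover have "(z - y) - (z - x) = - (y - x)" by simp
    ultimately have "0 \<le> - inner (y - x) (y - x)" by (simp only: inner_minus_right)
    then have "inner (y - x) (y - x) \<le> 0" by simp
    then show ?thesis by (metis eq_iff_diff_eq_0 inner_gt_zero_iff not_less)
  qed
  then show ?thesis unfolding resolvent_def using assms(2) by (intro the_equality) blast+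
qed

lemma resolvent_in:
  fixes M :: "'a::euclidean_space \<Rightarrow> 'a set"
  assumes mm: "maximal_monotone M"
  shows "z - resolvent M z \<in> M (resolvent M z)"
proof -
  obtain x where "z - x \<in> M x" using minty[OF mm] by blast
  then show ?thesis using resolvent_eq[OF mm] by simp
qed

lemma resolvent_firm:
  fixes M :: "'a::euclidean_space \<Rightarrow> 'a set"
  assumes mm: "maximal_monotone M"
  shows "inner (resolvent M z - resolvent M z') ((z - resolvent M z) - (z' - resolvent M z')) \<ge> 0"
  by (rule mm_mono[OF mm resolvent_in[OF mm, of z] resolvent_in[OF mm, of z']])

lemma resolvent_nonexp:
  fixes M :: "'a::euclidean_space \<Rightarrow> 'a set"
  assumes mm: "maximal_monotone M"
  shows "norm (resolvent M z - resolvent M z') \<le> norm (z - z')"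
proof -
  define d where "d = resolvent M z - resolvent M z'"
  define e where "e = z - z'"
  have "0 \<le> inner d (e - d)" using resolvent_firm[OF mm, of z z'] unfolding d_def e_def
    by (simp add: algebra_simps)
  then have "inner d d \<le> inner d e" by (simp add: inner_diff_right)
  also have "\<dots> \<le> norm d * norm e" by (rule norm_cauchy_schwarz)
  finally have "norm d * norm d \<le> norm d * norm e" by (metis power2_norm_eq_inner power2_eq_square)
  then have "norm d \<le> norm e" by (cases "norm d = 0") (auto simp: mult_le_cancel_left)
  then show ?thesis unfolding d_def e_def .
qed

lemma refl_nonexp:
  fixes M :: "'a::euclidean_space \<Rightarrow> 'a set"
  assumes mm: "maximal_monotone M"
  shows "norm (refl_resolvent M z - refl_resolvent M z') \<le> norm (z - z')"
proof -
  define d where "d = resolvent M z - resolvent M z'"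
  define e where "e = z - z'"
  have "0 \<le> inner d (e - d)" using resolvent_firm[OF mm, of z z'] unfolding d_def e_def
    by (simp add: algebra_simps)
  have "refl_resolvent M z - refl_resolvent M z' = 2 *\<^sub>R d - e"
    by (simp add: refl_resolvent_def d_def e_def algebra_simps)
  moreover have "(norm (2 *\<^sub>R d - e))^2 = (norm e)^2 - 4 * inner d (e - d)"
  proof -
    have "(norm (2 *\<^sub>R d - e))^2 = inner (2 *\<^sub>R d - e) (2 *\<^sub>R d - e)" by (simp only: power2_norm_eq_inner)
    also have "\<dots> = 4 * inner d d - 4 * inner d e + inner e e"
      by (simp add: inner_diff_left inner_diff_right inner_commute[of e d])
    also have "\<dots> = inner e e - 4 * inner d (e - d)" by (simp add: inner_diff_right)
    finally show ?thesis by (simp only: power2_norm_eq_inner)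
  qed
  ultimately have "(norm (refl_resolvent M z - refl_resolvent M z'))^2 \<le> (norm e)^2"
    using \<open>0 \<le> inner d (e - d)\<close> by simp
  then show ?thesis unfolding e_def by (rule power2_le_imp_le) simp
qed

lemma small_eventually:
  assumes "(\<epsilon>::real) > 0"
  shows "eventually (\<lambda>k. C / (real k + 2) \<le> \<epsilon>) sequentially"
proof -
  obtain N :: nat where N: "C / \<epsilon> < real N" using reals_Archimedean2 by blast
  have "C / (real k + 2) \<le> \<epsilon>" if "k \<ge> N" for k
  proof -
    have "C < \<epsilon> * real N" using N assms by (simp add: divide_less_eq mult.commute)
    also have "\<dots> \<le> \<epsilon> * (real k + 2)" using that assms by simp
    finally show ?thesis by (simp add: divide_le_eq add_pos_pos mult.commute)
  qed
  then show ?thesis unfolding eventually_sequentially by blast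
qed

lemma rate_lemma:
  fixes a \<beta> :: "nat \<Rightarrow> real" and s :: real
  assumes s: "s \<ge> 1" and a0: "\<And>k. a k \<ge> 0"
    and rec: "\<And>k. (real k + s + 1) * a (Suc k) \<le> (real k + s) * a k + \<beta> k"
    and beta: "\<And>\<epsilon>. \<epsilon> > 0 \<Longrightarrow> eventually (\<lambda>k. \<beta> k \<le> \<epsilon>) sequentially"
  shows "a \<longlonglongrightarrow> 0"
  unfolding lim_sequentially
proof (intro allI impI)
  fix r :: real assume r: "r > 0"
  define \<epsilon> where "\<epsilon> = r / 2"
  have \<epsilon>: "\<epsilon> > 0" using r by (simp add: \<epsilon>_def)
  obtain N where N: "\<And>k. k \<ge> N \<Longrightarrow> \<beta> k \<le> \<epsilon>" using beta[OF \<epsilon>] unfolding eventually_sequentially by blast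
  define b where "b k = (real k + s) * a k" for k
  have bN: "b (N + m) \<le> b N + real m * \<epsilon>" for m
  proof (induction m)
    case 0 then show ?case by simp
  next
    case (Suc m)
    have "b (N + Suc m) = (real (N + m) + s + 1) * a (Suc (N + m))" by (simp add: b_def algebra_simps)
    also have "\<dots> \<le> b (N + m) + \<beta> (N + m)" using rec[of "N + m"] by (simp add: b_def)
    also have "\<dots> \<le> b N + real m * \<epsilon> + \<epsilon>" using Suc N[of "N + m"] by simp
    finally show ?case by (simp add: algebra_simps)
  qed
  obtain M :: nat where M: "b N / \<epsilon> < real M" using reals_Archimedean2 by blast
  have "dist (a n) 0 < r" if "n \<ge> N + M" for n
  proof -
    define m where "m = n - N"
    have m: "n = N + m" "m \<ge> M" using that by (simp_all add: m_def)
    have pos: "real n + s > 0" using s by simp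
    have "(real n + s) * a n = b n" by (simp add: b_def)
    also have "\<dots> \<le> b N + real m * \<epsilon>" using bN m by simp
    also have "\<dots> < \<epsilon> * real M + real m * \<epsilon>" using M \<epsilon> by (simp add: divide_less_eq mult.commute)
    also have "\<dots> \<le> \<epsilon> * (real n + s) + \<epsilon> * (real n + s)"
      using m s \<epsilon> by (intro add_mono mult_left_mono) auto
    also have "\<dots> = (real n + s) * r" by (simp add: \<epsilon>_def algebra_simps)
    finally have "a n < r" using pos by simp
    then show ?thesis using a0[of n] by simp
  qed
  then show "\<exists>no. \<forall>n\<ge>no. dist (a n) 0 < r" by blast
qed

lemma nonexp_tendsto:
  fixes T :: "'a::real_normed_vector \<Rightarrow> 'b::real_normed_vector"
  assumes ne: "\<And>x y. norm (T x - T y) \<le> norm (x - y)" and X: "(X \<longlongrightarrow> l) F"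
  shows "((\<lambda>n. T (X n)) \<longlongrightarrow> T l) F"
proof -
  have "((\<lambda>n. X n - l) \<longlongrightarrow> 0) F" using X by (rule LIM_zero)
  then have "((\<lambda>n. norm (X n - l)) \<longlongrightarrow> 0) F" by (rule tendsto_norm_zero)
  then have "((\<lambda>n. T (X n) - T l) \<longlongrightarrow> 0) F"
    by (rule Lim_null_comparison[rotated]) (intro always_eventually allI ne)
  then show ?thesis by (rule LIM_zero_cancel)
qed

lemma conv_ident:
  fixes y p q :: "'a::real_inner"
  shows "(1-t) * (norm (y - p))^2 + t * (norm (y - q))^2
       = (norm (y - ((1-t) *\<^sub>R p + t *\<^sub>R q)))^2 + t * (1-t) * (norm (p - q))^2"
  by (simp add: power2_norm_eq_inner inner_diff_left inner_diff_right inner_add_left inner_add_right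
      inner_commute[of q p] inner_commute[of q y] inner_commute[of p y]) algebra

lemma fix_convex:
  fixes T :: "'a::real_inner \<Rightarrow> 'a"
  assumes ne: "\<And>x y. norm (T x - T y) \<le> norm (x - y)"
  shows "convex (fixpoints T)"
  unfolding convex_alt
proof (intro ballI allI impI)
  fix p q and t :: real
  assume p: "p \<in> fixpoints T" and q: "q \<in> fixpoints T" and t: "0 \<le> t \<and> t \<le> 1"
  define z where "z = (1-t) *\<^sub>R p + t *\<^sub>R q"
  define D where "D = norm (p - q)"
  define y where "y = T z"
  have Tp: "T p = p" using p by (simp add: fixpoints_def)
  have Tq: "T q = q" using q by (simp add: fixpoints_def)
  have zp: "z - p = t *\<^sub>R (q - p)" by (simp add: z_def algebra_simps)
  have zq: "z - q = (1-t) *\<^sub>R (p - q)" by (simp add: z_def algebra_simps)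
  have "norm (y - p) \<le> norm (z - p)" using ne[of z p] unfolding Tp y_def .
  also have "norm (z - p) = t * D" unfolding zp D_def using t by (simp add: norm_minus_commute[of q p])
  finally have yp: "norm (y - p) \<le> t * D" .
  have "norm (y - q) \<le> norm (z - q)" using ne[of z q] unfolding Tq y_def .
  also have "norm (z - q) = (1-t) * D" unfolding zq D_def using t by simp
  finally have yq: "norm (y - q) \<le> (1-t) * D" .
  have A: "(norm (y - p))^2 \<le> (t * D)^2" using yp by (intro power_mono) auto
  have B: "(norm (y - q))^2 \<le> ((1-t) * D)^2" using yq by (intro power_mono) auto
  have "(norm (y - z))^2 = (1-t) * (norm (y - p))^2 + t * (norm (y - q))^2 - t * (1-t) * D^2"
    using conv_ident[of t y p q] by (simp add: z_def D_def)
  also have "\<dots> \<le> (1-t) * (t * D)^2 + t * ((1-t) * D)^2 - t * (1-t) * D^2"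
    using A B t by (intro diff_right_mono add_mono mult_left_mono) auto
  also have "\<dots> = 0" by (simp add: power2_eq_square algebra_simps)
  finally have "y = z" by simp
  then show "(1 - t) *\<^sub>R p + t *\<^sub>R q \<in> fixpoints T" by (simp add: fixpoints_def y_def z_def)
qed

lemma inv_tendsto: "(\<lambda>k. C / (real k + 2)) \<longlonglongrightarrow> 0"
proof -
  have "filterlim (\<lambda>k. 2 + real k) at_top sequentially"
    by (rule filterlim_tendsto_add_at_top[OF tendsto_const filterlim_real_sequentially])
  then have "filterlim (\<lambda>k. real k + 2) at_top sequentially" by (simp add: add.commute)
  then show ?thesis by (rule real_tendsto_divide_at_top[OF tendsto_const])
qed

lemma lin_ident:
  fixes X Y T1 T0 u :: "'a::real_vector" and c :: real
  assumes e1: "(c+3) *\<^sub>R X = u + (c+2) *\<^sub>R T1" and e0: "(c+2) *\<^sub>R Y = u + (c+1) *\<^sub>R T0"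
  shows "((c+2)*(c+3)) *\<^sub>R (X - Y) = ((c+2)*(c+2)) *\<^sub>R (T1 - T0) + (T0 - u)"
proof -
  have "((c+2)*(c+3)) *\<^sub>R (X - Y) = (c+2) *\<^sub>R ((c+3) *\<^sub>R X) - (c+3) *\<^sub>R ((c+2) *\<^sub>R Y)"
    by (simp add: scaleR_diff_right mult.commute)
  also have "\<dots> = (c+2) *\<^sub>R (u + (c+2) *\<^sub>R T1) - (c+3) *\<^sub>R (u + (c+1) *\<^sub>R T0)"
    by (simp only: e1 e0)
  also have "\<dots> = ((c+2) - (c+3)) *\<^sub>R u + ((c+2)*(c+2)) *\<^sub>R T1 - ((c+3)*(c+1)) *\<^sub>R T0"
  proof -
    have uu: "(c+2) *\<^sub>R u - (c+3) *\<^sub>R u = - u" by (simp add: scaleR_diff_left[symmetric])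
    show ?thesis by (simp add: scaleR_add_right scaleR_diff_left uu)
  qed
  also have "(c+3)*(c+1) = (c+2)*(c+2) - 1" by algebra
  also have "(c+2) - (c+3) = -1" by simp
  finally have eq: "((c+2)*(c+3)) *\<^sub>R (X - Y) = (-1) *\<^sub>R u + ((c+2)*(c+2)) *\<^sub>R T1 - ((c+2)*(c+2) - 1) *\<^sub>R T0" .
  have f: "T0 + 3 *\<^sub>R T0 = (4::real) *\<^sub>R T0"
  proof -
    have "(4::real) = 1 + 3" by simp
    then show ?thesis by (metis scaleR_add_left scaleR_one)
  qed
  show ?thesis unfolding eq by (simp add: scaleR_diff_left scaleR_diff_right algebra_simps f)
qed

lemma sq_rec:
  fixes X U Y Z :: "'a::real_inner" and c :: real
  assumes c: "c \<ge> 0" and h: "(c+2) *\<^sub>R X = U + (c+1) *\<^sub>R Y" and YZ: "norm Y \<le> norm Z"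
  shows "(c+2) * (norm X)^2 \<le> (c+1) * (norm Z)^2 + 2 * inner U X"
proof -
  have "(c+1) *\<^sub>R Y = (c+2) *\<^sub>R X - U" using h by (simp add: algebra_simps)
  then have "((c+1) * norm Y)^2 = (norm ((c+2) *\<^sub>R X - U))^2" using c by (metis abs_of_nonneg norm_scaleR add_nonneg_nonneg zero_le_one)
  also have "\<dots> = inner ((c+2) *\<^sub>R X - U) ((c+2) *\<^sub>R X - U)" by (simp only: power2_norm_eq_inner)
  also have "\<dots> = (c+2)*(c+2) * inner X X - 2*(c+2) * inner U X + inner U U"
    by (simp add: inner_diff_left inner_diff_right inner_commute[of X U] algebra_simps)
  finally have eq: "(c+2)*(c+2) * (norm X)^2 = ((c+1) * norm Y)^2 + 2*(c+2) * inner U X - inner U U"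
    by (simp add: power2_norm_eq_inner)
  have "((c+1) * norm Y)^2 \<le> ((c+1) * norm Z)^2" using YZ c by (intro power_mono mult_left_mono) auto
  also have "\<dots> = (c+1)*(c+1) * (norm Z)^2" by (simp add: power2_eq_square)
  also have "\<dots> \<le> (c+2)*(c+1) * (norm Z)^2" using c by (intro mult_right_mono) auto
  finally have h1: "((c+1) * norm Y)^2 \<le> (c+2)*(c+1) * (norm Z)^2" .
  have h2: "0 \<le> inner U U" by simp
  have "(c+2)*((c+2) * (norm X)^2) = (c+2)*(c+2) * (norm X)^2" by (simp only: mult.assoc)
  also have "\<dots> = ((c+1) * norm Y)^2 + 2*(c+2) * inner U X - inner U U" by (rule eq)
  also have "\<dots> \<le> (c+2)*(c+1) * (norm Z)^2 + 2*(c+2) * inner U X" using h1 h2 by linarith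
  also have "\<dots> = (c+2) * ((c+1) * (norm Z)^2 + 2 * inner U X)" by (simp add: algebra_simps)
  finally have "(c+2)*((c+2) * (norm X)^2) \<le> (c+2) * ((c+1) * (norm Z)^2 + 2 * inner U X)" .
  then show ?thesis using c by simp
qed

lemma halpern:
  fixes T :: "'a::euclidean_space \<Rightarrow> 'a" and \<eta> :: "nat \<Rightarrow> 'a"
  assumes ne: "\<And>x y. norm (T x - T y) \<le> norm (x - y)"
    and Fne: "fixpoints T \<noteq> {}"
    and E: "\<And>k. (real k + 2) *\<^sub>R \<eta> (Suc k) = \<eta> 0 + (real k + 1) *\<^sub>R T (\<eta> k)"
  shows "\<eta> \<longlonglongrightarrow> closest_point (fixpoints T) (\<eta> 0)"
proof -
  define u where "u = \<eta> 0"
  define F where "F = fixpoints T"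
  have contT: "continuous_on UNIV T"
  proof (clarsimp simp: continuous_on_iff)
    fix x and e :: real assume "e > 0"
    then show "\<exists>d>0. \<forall>x'. dist x' x < d \<longrightarrow> dist (T x') (T x) < e"
      by (intro exI[of _ e]) (auto simp: dist_norm intro: le_less_trans[OF ne])
  qed
  have clF: "closed F" unfolding F_def fixpoints_def by (intro closed_Collect_eq contT continuous_on_id)
  have cvF: "convex F" unfolding F_def by (rule fix_convex[OF ne])
  have Fne': "F \<noteq> {}" using Fne by (simp add: F_def)
  define p where "p = closest_point F u"
  have pF: "p \<in> F" unfolding p_def by (rule closest_point_in_set[OF clF Fne'])
  have Tp: "T p = p" using pF by (simp add: F_def fixpoints_def)
  have dot: "inner (u - p) (q - p) \<le> 0" if "q \<in> F" for q
    unfolding p_def by (rule closest_point_dot[OF cvF clF that])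
  define R where "R = norm (u - p)"
  have E': "(real k + 2) *\<^sub>R (\<eta> (Suc k) - p) = (u - p) + (real k + 1) *\<^sub>R (T (\<eta> k) - p)" for k
  proof -
    have "(real k + 2) *\<^sub>R (\<eta> (Suc k) - p) = (real k + 2) *\<^sub>R \<eta> (Suc k) - (1 + (real k + 1)) *\<^sub>R p"
      by (simp add: scaleR_diff_right add.commute add.left_commute)
    also have "\<dots> = u + (real k + 1) *\<^sub>R T (\<eta> k) - (1 + (real k + 1)) *\<^sub>R p" by (simp only: E u_def)
    also have "\<dots> = (u - p) + (real k + 1) *\<^sub>R (T (\<eta> k) - p)"
      by (simp only: scaleR_add_left scaleR_diff_right scaleR_one) (simp add: algebra_simps)
    finally show ?thesis .
  qed
  have bound: "norm (\<eta> k - p) \<le> R" for k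
  proof (induction k)
    case 0 then show ?case by (simp add: R_def u_def)
  next
    case (Suc k)
    have "(real k + 2) * norm (\<eta> (Suc k) - p) = norm ((real k + 2) *\<^sub>R (\<eta> (Suc k) - p))" by simp
    also have "\<dots> \<le> norm (u - p) + norm ((real k + 1) *\<^sub>R (T (\<eta> k) - p))"
      unfolding E' by (rule norm_triangle_ineq)
    also have "\<dots> = R + (real k + 1) * norm (T (\<eta> k) - T p)" by (simp add: R_def Tp)
    also have "\<dots> \<le> R + (real k + 1) * R"
      using ne[of "\<eta> k" p] Suc.IH by (intro add_left_mono mult_left_mono) auto
    finally have "(real k + 2) * norm (\<eta> (Suc k) - p) \<le> (real k + 2) * R" by (simp add: algebra_simps)
    then show ?case by simp
  qed
  have TB: "norm (T (\<eta> k) - u) \<le> 2 * R" for k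
  proof -
    have "norm (T (\<eta> k) - u) \<le> norm (T (\<eta> k) - T p) + norm (p - u)"
      using norm_triangle_ineq[of "T (\<eta> k) - p" "p - u"] Tp by simp
    also have "\<dots> \<le> R + R" using ne[of "\<eta> k" p] bound[of k] by (intro add_mono) (auto simp: R_def norm_minus_commute)
    finally show ?thesis by simp
  qed
  define d where "d k = norm (\<eta> (Suc k) - \<eta> k)" for k
  have drec: "(real k + 2 + 1) * d (Suc k) \<le> (real k + 2) * d k + 2 * R / (real k + 2)" for k
  proof -
    define c where "c = real k"
    have e1: "(c+3) *\<^sub>R \<eta> (Suc (Suc k)) = u + (c+2) *\<^sub>R T (\<eta> (Suc k))"
      using E[of "Suc k"] by (simp add: c_def u_def add.commute add.left_commute)
    have e0: "(c+2) *\<^sub>R \<eta> (Suc k) = u + (c+1) *\<^sub>R T (\<eta> k)"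
      using E[of k] by (simp add: c_def u_def)
    have "(c+2)*(c+3) * d (Suc k) = norm (((c+2)*(c+3)) *\<^sub>R (\<eta> (Suc (Suc k)) - \<eta> (Suc k)))"
      by (simp add: d_def c_def)
    also have "\<dots> = norm (((c+2)*(c+2)) *\<^sub>R (T (\<eta> (Suc k)) - T (\<eta> k)) + (T (\<eta> k) - u))"
      by (simp only: lin_ident[OF e1 e0])
    also have "\<dots> \<le> (c+2)*(c+2) * norm (T (\<eta> (Suc k)) - T (\<eta> k)) + norm (T (\<eta> k) - u)"
      using norm_triangle_ineq[of "((c+2)*(c+2)) *\<^sub>R (T (\<eta> (Suc k)) - T (\<eta> k))" "T (\<eta> k) - u"]
      by (simp add: c_def)
    also have "\<dots> \<le> (c+2)*(c+2) * d k + 2 * R"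
      using ne[of "\<eta> (Suc k)" "\<eta> k"] TB[of k] by (intro add_mono mult_left_mono) (auto simp: d_def c_def)
    finally have A: "(c+2)*(c+3) * d (Suc k) \<le> (c+2)*(c+2) * d k + 2 * R" .
    have pos: "c + 2 > 0" by (simp add: c_def)
    have "((c+3) * d (Suc k) - (c+2) * d k) * (c+2) = (c+2)*(c+3) * d (Suc k) - (c+2)*(c+2) * d k"
      by (simp add: algebra_simps)
    then have "((c+3) * d (Suc k) - (c+2) * d k) * (c+2) \<le> 2 * R" using A by linarith
    then have "(c+3) * d (Suc k) - (c+2) * d k \<le> 2 * R / (c+2)" using pos by (simp add: pos_le_divide_eq)
    moreover have "(c + 2 + 1) * d (Suc k) = (c + 3) * d (Suc k)" by simp
    ultimately have "(c + 2 + 1) * d (Suc k) \<le> (c + 2) * d k + 2 * R / (c + 2)" by linarith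
    then show ?thesis by (simp only: c_def)
  qed
  have d0: "d \<longlonglongrightarrow> 0"
  proof (rule rate_lemma[where s=2])
    show "\<And>\<epsilon>. \<epsilon> > 0 \<Longrightarrow> eventually (\<lambda>k. 2 * R / (real k + 2) \<le> \<epsilon>) sequentially"
      by (rule small_eventually)
    show "(2::real) \<ge> 1" by simp
    show "\<And>k. d k \<ge> 0" by (simp add: d_def)
    show "\<And>k. (real k + 2 + 1) * d (Suc k) \<le> (real k + 2) * d k + 2 * R / (real k + 2)" by (rule drec)
  qed
  have res_bound: "norm (\<eta> k - T (\<eta> k)) \<le> d k + 2 * R / (real k + 2)" for k
  proof -
    have "(real k + 2) *\<^sub>R (\<eta> (Suc k) - T (\<eta> k)) = (real k + 2) *\<^sub>R \<eta> (Suc k) - (1 + (real k + 1)) *\<^sub>R T (\<eta> k)"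
      by (simp add: scaleR_diff_right add.commute add.left_commute)
    also have "\<dots> = u - T (\<eta> k)" by (subst E) (simp add: u_def scaleR_add_left scaleR_2)
    finally have "(real k + 2) * norm (\<eta> (Suc k) - T (\<eta> k)) = norm (u - T (\<eta> k))"
      by (metis abs_of_nonneg norm_scaleR of_nat_0_le_iff add_nonneg_nonneg zero_le_numeral)
    also have "\<dots> \<le> 2 * R" using TB[of k] by (simp add: norm_minus_commute)
    finally have "norm (\<eta> (Suc k) - T (\<eta> k)) \<le> 2 * R / (real k + 2)"
      by (simp add: pos_le_divide_eq mult.commute)
    moreover have "norm (\<eta> k - T (\<eta> k)) \<le> norm (\<eta> k - \<eta> (Suc k)) + norm (\<eta> (Suc k) - T (\<eta> k))"
      using norm_triangle_ineq[of "\<eta> k - \<eta> (Suc k)" "\<eta> (Suc k) - T (\<eta> k)"] by simp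
    ultimately show ?thesis by (simp add: d_def norm_minus_commute)
  qed
  have resT: "(\<lambda>k. \<eta> k - T (\<eta> k)) \<longlonglongrightarrow> 0"
  proof (rule Lim_null_comparison)
    show "eventually (\<lambda>k. norm (\<eta> k - T (\<eta> k)) \<le> d k + 2 * R / (real k + 2)) sequentially"
      by (intro always_eventually allI res_bound)
    show "(\<lambda>k. d k + 2 * R / (real k + 2)) \<longlonglongrightarrow> 0"
      using tendsto_add[OF d0 inv_tendsto[of "2 * R"]] by simp
  qed
  have limsup: "eventually (\<lambda>k. inner (u - p) (\<eta> (Suc k) - p) \<le> \<epsilon>) sequentially" if eps: "\<epsilon> > 0" for \<epsilon>
  proof (rule ccontr)
    define S where "S = {n. inner (u - p) (\<eta> (Suc n) - p) > \<epsilon>}"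
    assume "\<not> eventually (\<lambda>k. inner (u - p) (\<eta> (Suc k) - p) \<le> \<epsilon>) sequentially"
    then have "\<forall>N. \<exists>n\<ge>N. n \<in> S" unfolding eventually_sequentially S_def by (auto simp: not_le)
    then have "infinite S" by (simp add: infinite_nat_iff_unbounded_le)
    then obtain r :: "nat \<Rightarrow> nat" where r: "strict_mono r" "\<And>n. r n \<in> S" using infinite_enumerate by blast
    have inb: "\<forall>n. \<eta> (Suc (r n)) \<in> cball p R" using bound by (simp add: dist_norm norm_minus_commute)
    obtain q r2 where q: "q \<in> cball p R" "strict_mono r2" "((\<lambda>n. \<eta> (Suc (r n))) \<circ> r2) \<longlonglongrightarrow> q"
      using seq_compactE[OF compact_imp_seq_compact[OF compact_cball] inb] by blast
    define s where "s n = Suc (r (r2 n))" for n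
    have ss: "strict_mono s" using r(1) q(2) unfolding s_def strict_mono_def by simp
    have qlim: "(\<lambda>n. \<eta> (s n)) \<longlonglongrightarrow> q" using q(3) by (simp add: s_def o_def)
    have "(\<lambda>n. \<eta> (s n) - T (\<eta> (s n))) \<longlonglongrightarrow> 0"
      using LIMSEQ_subseq_LIMSEQ[OF resT ss] by (simp add: o_def)
    moreover have "(\<lambda>n. \<eta> (s n) - T (\<eta> (s n))) \<longlonglongrightarrow> q - T q"
      by (intro tendsto_diff qlim nonexp_tendsto[OF ne qlim])
    ultimately have "q - T q = 0" using LIMSEQ_unique by blast
    then have qF: "q \<in> F" by (simp add: F_def fixpoints_def)
    have "(\<lambda>n. inner (u - p) (\<eta> (s n) - p)) \<longlonglongrightarrow> inner (u - p) (q - p)"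
      by (intro tendsto_intros qlim)
    moreover have "\<forall>n\<ge>0. \<epsilon> \<le> inner (u - p) (\<eta> (s n) - p)"
      using r(2) by (auto simp: S_def s_def less_imp_le)
    ultimately have "\<epsilon> \<le> inner (u - p) (q - p)" using LIMSEQ_le_const by blast
    then show False using dot[OF qF] eps by simp
  qed
  define a where "a k = (norm (\<eta> k - p))^2" for k
  have a0: "a \<longlonglongrightarrow> 0"
  proof (rule rate_lemma[where s=1 and \<beta>="\<lambda>k. 2 * inner (u - p) (\<eta> (Suc k) - p)"])
    show "(real k + 1 + 1) * a (Suc k) \<le> (real k + 1) * a k + 2 * inner (u - p) (\<eta> (Suc k) - p)" for k
    proof -
      have "norm (T (\<eta> k) - p) \<le> norm (\<eta> k - p)" using ne[of "\<eta> k" p] Tp by simp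
      then have "(real k + 2) * (norm (\<eta> (Suc k) - p))^2 \<le> (real k + 1) * (norm (\<eta> k - p))^2 + 2 * inner (u - p) (\<eta> (Suc k) - p)"
        by (intro sq_rec[OF _ E']) auto
      then show ?thesis by (simp add: a_def add.assoc)
    qed
    show "eventually (\<lambda>k. 2 * inner (u - p) (\<eta> (Suc k) - p) \<le> \<epsilon>) sequentially" if "\<epsilon> > 0" for \<epsilon>
      using limsup[of "\<epsilon>/2"] that by (simp add: mult.commute)
  qed (auto simp: a_def)
  have "(\<lambda>k. sqrt (a k)) \<longlonglongrightarrow> sqrt 0" by (intro tendsto_intros a0)
  then have "(\<lambda>k. norm (\<eta> k - p)) \<longlonglongrightarrow> 0" by (simp add: a_def)
  then have "(\<lambda>k. \<eta> k - p) \<longlonglongrightarrow> 0" by (rule tendsto_norm_zero_cancel)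
  then have "\<eta> \<longlonglongrightarrow> p" by (rule LIM_zero_cancel)
  then show ?thesis by (simp add: p_def F_def u_def)
qed

theorem corollary3p2:
  fixes M1 M2 :: "'a::euclidean_space \<Rightarrow> 'a set"
    and \<sigma> :: real and w x v \<eta> :: "nat \<Rightarrow> 'a"
  assumes "maximal_monotone M1" and "maximal_monotone M2"
    and "maximal_monotone (op_sum M1 M2)"
    and "zer (op_sum M1 M2) \<noteq> {}"
    and "\<sigma> > 0"
    and w_def: "\<And>k. w (Suc k) = resolvent (op_scale \<sigma> M2) (\<eta> k)"
    and x_def: "\<And>k. x (Suc k) = resolvent (op_scale \<sigma> M1) (2 *\<^sub>R w (Suc k) - \<eta> k)"
    and v_def: "\<And>k. v (Suc k) = 2 *\<^sub>R x (Suc k) - (2 *\<^sub>R w (Suc k) - \<eta> k)"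
    and eta_def: "\<And>k. \<eta> (Suc k) = (1 / (real k + 2)) *\<^sub>R \<eta> 0
                                  + ((real k + 1) / (real k + 2)) *\<^sub>R v (Suc k)"
  shows "let \<eta>s = closest_point (fixpoints (PR_op \<sigma> M1 M2)) (\<eta> 0);
             ws = resolvent (op_scale \<sigma> M2) \<eta>s
         in \<eta> \<longlonglongrightarrow> \<eta>s \<and> v \<longlonglongrightarrow> \<eta>s \<and> x \<longlonglongrightarrow> ws \<and> w \<longlonglongrightarrow> ws
            \<and> ws \<in> zer (op_sum M1 M2)"
proof -
  have s: "\<sigma> > 0" by fact
  define A1 where "A1 = op_scale \<sigma> M1"
  define A2 where "A2 = op_scale \<sigma> M2"
  have mm1: "maximal_monotone A1" unfolding A1_def by (rule scale_maxmono[OF assms(1) s])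
  have mm2: "maximal_monotone A2" unfolding A2_def by (rule scale_maxmono[OF assms(2) s])
  define J1 where "J1 = resolvent A1"
  define J2 where "J2 = resolvent A2"
  define R1 where "R1 = refl_resolvent A1"
  define R2 where "R2 = refl_resolvent A2"
  define T where "T = PR_op \<sigma> M1 M2"
  have Tdef: "T z = R1 (R2 z)" for z by (simp add: T_def PR_op_def R1_def R2_def A1_def A2_def)
  have R1def: "R1 z = 2 *\<^sub>R J1 z - z" for z by (simp add: R1_def J1_def refl_resolvent_def)
  have R2def: "R2 z = 2 *\<^sub>R J2 z - z" for z by (simp add: R2_def J2_def refl_resolvent_def)
  have ne: "norm (T a - T b) \<le> norm (a - b)" for a b
  proof -
    have "norm (T a - T b) \<le> norm (R2 a - R2 b)" unfolding Tdef R1_def by (rule refl_nonexp[OF mm1])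
    also have "\<dots> \<le> norm (a - b)" unfolding R2_def by (rule refl_nonexp[OF mm2])
    finally show ?thesis .
  qed
  have J2ne: "norm (J2 a - J2 b) \<le> norm (a - b)" for a b unfolding J2_def by (rule resolvent_nonexp[OF mm2])
  have J1ne: "norm (J1 a - J1 b) \<le> norm (a - b)" for a b unfolding J1_def by (rule resolvent_nonexp[OF mm1])
  have R2ne: "norm (R2 a - R2 b) \<le> norm (a - b)" for a b unfolding R2_def by (rule refl_nonexp[OF mm2])
  have Fne: "fixpoints T \<noteq> {}"
  proof -
    obtain z0 where "0 \<in> op_sum M1 M2 z0" using assms(4) by (auto simp: zer_def)
    then obtain a b where ab: "a \<in> M1 z0" "b \<in> M2 z0" "a + b = 0" by (auto simp: op_sum_def)
    define p0 where "p0 = z0 + \<sigma> *\<^sub>R b"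
    have "p0 - z0 \<in> A2 z0" using ab(2) by (simp add: p0_def A2_def op_scale_def imageI)
    then have J2p: "J2 p0 = z0" unfolding J2_def by (rule resolvent_eq[OF mm2])
    have R2p: "R2 p0 = z0 - \<sigma> *\<^sub>R b" unfolding R2def J2p by (simp add: p0_def scaleR_2)
    have "a = - b" using ab(3) by (simp add: eq_neg_iff_add_eq_0)
    then have "(z0 - \<sigma> *\<^sub>R b) - z0 = \<sigma> *\<^sub>R a" by simp
    then have "(z0 - \<sigma> *\<^sub>R b) - z0 \<in> A1 z0" using ab(1) unfolding A1_def op_scale_def by (simp only: imageI)
    then have J1p: "J1 (z0 - \<sigma> *\<^sub>R b) = z0" unfolding J1_def by (rule resolvent_eq[OF mm1])
    have "T p0 = p0" unfolding Tdef R2p R1def J1p by (simp add: p0_def scaleR_2)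
    then show ?thesis by (auto simp: fixpoints_def)
  qed
  have vT: "v (Suc k) = T (\<eta> k)" for k
    by (simp add: v_def Tdef R1def R2def x_def w_def J1_def J2_def A1_def A2_def)
  have E: "(real k + 2) *\<^sub>R \<eta> (Suc k) = \<eta> 0 + (real k + 1) *\<^sub>R T (\<eta> k)" for k
  proof -
    have pos: "real k + 2 \<noteq> 0" by simp
    have "(real k + 2) *\<^sub>R \<eta> (Suc k) = ((real k + 2) * (1 / (real k + 2))) *\<^sub>R \<eta> 0
        + ((real k + 2) * ((real k + 1) / (real k + 2))) *\<^sub>R v (Suc k)"
      by (simp only: eta_def scaleR_add_right scaleR_scaleR)
    also have "\<dots> = \<eta> 0 + (real k + 1) *\<^sub>R v (Suc k)" using pos by simp
    finally show ?thesis by (simp add: vT)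
  qed
  define \<eta>s where "\<eta>s = closest_point (fixpoints T) (\<eta> 0)"
  define ws where "ws = J2 \<eta>s"
  have eta_lim: "\<eta> \<longlonglongrightarrow> \<eta>s" unfolding \<eta>s_def by (rule halpern[OF ne Fne E])
  have clF: "closed (fixpoints T)"
  proof -
    have contT: "continuous_on UNIV T"
    proof (clarsimp simp: continuous_on_iff)
      fix x and e :: real assume "e > 0"
      then show "\<exists>d>0. \<forall>x'. dist x' x < d \<longrightarrow> dist (T x') (T x) < e"
        by (intro exI[of _ e]) (auto simp: dist_norm intro: le_less_trans[OF ne])
    qed
    show ?thesis unfolding fixpoints_def by (intro closed_Collect_eq contT continuous_on_id)
  qed
  have Tfix: "T \<eta>s = \<eta>s" using closest_point_in_set[OF clF Fne] by (simp add: \<eta>s_def fixpoints_def)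
  have v_lim: "v \<longlonglongrightarrow> \<eta>s"
  proof -
    have "(\<lambda>k. T (\<eta> k)) \<longlonglongrightarrow> T \<eta>s" by (rule nonexp_tendsto[OF ne eta_lim])
    then have "(\<lambda>k. v (Suc k)) \<longlonglongrightarrow> \<eta>s" by (simp add: vT Tfix)
    then show ?thesis by (rule LIMSEQ_imp_Suc)
  qed
  have w_lim: "w \<longlonglongrightarrow> ws"
  proof -
    have "(\<lambda>k. J2 (\<eta> k)) \<longlonglongrightarrow> J2 \<eta>s" by (rule nonexp_tendsto[OF J2ne eta_lim])
    then have "(\<lambda>k. w (Suc k)) \<longlonglongrightarrow> ws" by (simp add: w_def ws_def J2_def A2_def)
    then show ?thesis by (rule LIMSEQ_imp_Suc)
  qed
  have J1ws: "J1 (R2 \<eta>s) = ws"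
  proof -
    have "R1 (R2 \<eta>s) = \<eta>s" using Tfix by (simp add: Tdef)
    then have "2 *\<^sub>R J1 (R2 \<eta>s) = \<eta>s + R2 \<eta>s" by (simp add: R1def algebra_simps)
    also have "\<dots> = 2 *\<^sub>R ws" by (simp add: R2def ws_def)
    finally show ?thesis by simp
  qed
  have x_lim: "x \<longlonglongrightarrow> ws"
  proof -
    have "(\<lambda>k. R2 (\<eta> k)) \<longlonglongrightarrow> R2 \<eta>s" by (rule nonexp_tendsto[OF R2ne eta_lim])
    then have "(\<lambda>k. J1 (R2 (\<eta> k))) \<longlonglongrightarrow> J1 (R2 \<eta>s)" by (rule nonexp_tendsto[OF J1ne])
    moreover have "x (Suc k) = J1 (R2 (\<eta> k))" for k
      by (simp add: x_def w_def R2def J1_def J2_def A1_def A2_def)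
    ultimately have "(\<lambda>k. x (Suc k)) \<longlonglongrightarrow> ws" using J1ws by simp
    then show ?thesis by (rule LIMSEQ_imp_Suc)
  qed
  have zer: "ws \<in> zer (op_sum M1 M2)"
  proof -
    have "R2 \<eta>s - J1 (R2 \<eta>s) \<in> A1 (J1 (R2 \<eta>s))" unfolding J1_def by (rule resolvent_in[OF mm1])
    then have "ws - \<eta>s \<in> A1 ws" using J1ws by (simp add: R2def ws_def scaleR_2 algebra_simps)
    then obtain a where a: "a \<in> M1 ws" "ws - \<eta>s = \<sigma> *\<^sub>R a" by (auto simp: A1_def op_scale_def)
    have "\<eta>s - J2 \<eta>s \<in> A2 (J2 \<eta>s)" unfolding J2_def by (rule resolvent_in[OF mm2])
    then obtain b where b: "b \<in> M2 ws" "\<eta>s - ws = \<sigma> *\<^sub>R b" by (auto simp: A2_def op_scale_def ws_def)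
    have "\<sigma> *\<^sub>R (a + b) = \<sigma> *\<^sub>R a + \<sigma> *\<^sub>R b" by (rule scaleR_add_right)
    also have "\<dots> = (ws - \<eta>s) + (\<eta>s - ws)" using a(2) b(2) by simp
    also have "\<dots> = 0" by simp
    finally have "\<sigma> *\<^sub>R (a + b) = 0" .
    then have "a + b = 0" using s by simp
    then have "0 \<in> op_sum M1 M2 ws" unfolding op_sum_def using a(1) b(1) by (metis (mono_tags, lifting) mem_Collect_eq)
    then show ?thesis by (simp add: zer_def)
  qed
  show ?thesis
    using eta_lim v_lim x_lim w_lim zer
    unfolding Let_def \<eta>s_def ws_def J2_def A2_def T_def by simp
qed

end
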